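(* Let $(\mathcal{L},[\cdot,\cdot,\cdot]_{\mathcal{L}})$ be a (right) $3$-Leibniz algebra over a field $\mathbb{K}$ and $\overline{\mathcal{L}}=\mathbb{K}\oplus\mathcal{L}$. Then the linear map $R$ on $(\overline{\mathcal{L}}\otimes\overline{\mathcal{L}})^{\otimes 2}$ given by $R\big((a_1,x_1)\otimes(a_2,x_2)\otimes(b_1,y_1)\otimes(b_2,y_2)\big)=(b_1,y_1)\otimes(b_2,y_2)\otimes(a_1,x_1)\otimes(a_2,x_2)+(1,0)\otimes(1,0)\otimes\big((0,[x_1,y_1,y_2]_{\mathcal{L}})\otimes(a_2,x_2)+(a_1,x_1)\otimes(0,[x_2,y_1,y_2]_{\mathcal{L}})\big)$ is a solution of the Yang-Baxter equation on $\overline{\mathcal{L}}\otimes\overline{\mathcal{L}}$.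
   Context: A (right) $3$-Leibniz algebra is a vector space $\mathcal{L}$ with a trilinear map $[\cdot,\cdot,\cdot]_{\mathcal{L}}$ such that $[[x_1,x_2,x_3]_{\mathcal{L}},y_1,y_2]_{\mathcal{L}}=[[x_1,y_1,y_2]_{\mathcal{L}},x_2,x_3]_{\mathcal{L}}+[x_1,[x_2,y_1,y_2]_{\mathcal{L}},x_3]_{\mathcal{L}}+[x_1,x_2,[x_3,y_1,y_2]_{\mathcal{L}}]_{\mathcal{L}}$. A solution of the Yang-Baxter equation on $V$ is an invertible linear $R:V\otimes V\to V\otimes V$ with $(R\otimes\mathrm{Id})(\mathrm{Id}\otimes R)(R\otimes\mathrm{Id})=(\mathrm{Id}\otimes R)(R\otimes\mathrm{Id})(\mathrm{Id}\otimes R)$. *)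

theory Defs
  imports Main
begin

text \<open>A vector space over a field 'k with basis indexed by a set I is modelled as
the finitely supported functions I -> 'k (coordinate vectors). The tensor product of
such spaces with bases indexed by I and J is the space with basis indexed by I x J.\<close>

definition supp :: "('a \<Rightarrow> 'k::zero) \<Rightarrow> 'a set" where
  "supp f = {x. f x \<noteq> 0}"

definition fsp :: "'a set \<Rightarrow> ('a \<Rightarrow> 'k::zero) set" where
  "fsp I = {f. finite (supp f) \<and> supp f \<subseteq> I}"

definition vadd :: "('a \<Rightarrow> 'k::plus) \<Rightarrow> ('a \<Rightarrow> 'k) \<Rightarrow> 'a \<Rightarrow> 'k" where
  "vadd f g = (\<lambda>x. f x + g x)"

definition vsmult :: "'k::times \<Rightarrow> ('a \<Rightarrow> 'k) \<Rightarrow> 'a \<Rightarrow> 'k" where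
  "vsmult c f = (\<lambda>x. c * f x)"

definition delta :: "'a \<Rightarrow> 'a \<Rightarrow> 'k::zero_neq_one" where
  "delta x = (\<lambda>y. if y = x then 1 else 0)"

definition lin_ext :: "('a \<Rightarrow> 'c \<Rightarrow> 'k::comm_ring_1) \<Rightarrow> ('a \<Rightarrow> 'k) \<Rightarrow> 'c \<Rightarrow> 'k" where
  "lin_ext g T = (\<lambda>y. \<Sum>x\<in>supp T. T x * g x y)"

definition tens :: "('a \<Rightarrow> 'k::times) \<Rightarrow> ('c \<Rightarrow> 'k) \<Rightarrow> 'a \<times> 'c \<Rightarrow> 'k" where
  "tens A B = (\<lambda>(x, y). A x * B y)"

text \<open>L is the space with basis indexed by B, i.e. fsp B; br is the ternary bracket.\<close>
definition trilinear_on :: "'b set \<Rightarrow> (('b \<Rightarrow> 'k::field) \<Rightarrow> ('b \<Rightarrow> 'k) \<Rightarrow> ('b \<Rightarrow> 'k) \<Rightarrow> ('b \<Rightarrow> 'k)) \<Rightarrow> bool" where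
  "trilinear_on B br \<longleftrightarrow>
    (\<forall>x\<in>fsp B. \<forall>y\<in>fsp B. \<forall>z\<in>fsp B. br x y z \<in> fsp B) \<and>
    (\<forall>x\<in>fsp B. \<forall>x'\<in>fsp B. \<forall>y\<in>fsp B. \<forall>z\<in>fsp B. \<forall>c.
        br (vadd x x') y z = vadd (br x y z) (br x' y z) \<and>
        br (vsmult c x) y z = vsmult c (br x y z) \<and>
        br y (vadd x x') z = vadd (br y x z) (br y x' z) \<and>
        br y (vsmult c x) z = vsmult c (br y x z) \<and>
        br y z (vadd x x') = vadd (br y z x) (br y z x') \<and>
        br y z (vsmult c x) = vsmult c (br y z x))"

definition leibniz3 :: "'b set \<Rightarrow> (('b \<Rightarrow> 'k::field) \<Rightarrow> ('b \<Rightarrow> 'k) \<Rightarrow> ('b \<Rightarrow> 'k) \<Rightarrow> ('b \<Rightarrow> 'k)) \<Rightarrow> bool" where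
  "leibniz3 B br \<longleftrightarrow> trilinear_on B br \<and>
    (\<forall>x1\<in>fsp B. \<forall>x2\<in>fsp B. \<forall>x3\<in>fsp B. \<forall>y1\<in>fsp B. \<forall>y2\<in>fsp B.
       br (br x1 x2 x3) y1 y2 =
         vadd (vadd (br (br x1 y1 y2) x2 x3) (br x1 (br x2 y1 y2) x3)) (br x1 x2 (br x3 y1 y2)))"

text \<open>Elements of K \<oplus> L are pairs (a, x). Its basis is indexed by 'b option:
None stands for (1,0), Some b for (0, e_b).\<close>
definition ubar_idx :: "'b set \<Rightarrow> 'b option set" where
  "ubar_idx B = insert None (Some ` B)"

definition ucoord :: "'k \<times> ('b \<Rightarrow> 'k) \<Rightarrow> 'b option \<Rightarrow> 'k" where
  "ucoord u = (\<lambda>p. case p of None \<Rightarrow> fst u | Some b \<Rightarrow> snd u b)"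

definition ubasis :: "'b option \<Rightarrow> 'k::{zero_neq_one} \<times> ('b \<Rightarrow> 'k)" where
  "ubasis p = (case p of None \<Rightarrow> (1, (\<lambda>_. 0)) | Some b \<Rightarrow> (0, delta b))"

definition tens4 :: "'k::times \<times> ('b \<Rightarrow> 'k) \<Rightarrow> 'k \<times> ('b \<Rightarrow> 'k) \<Rightarrow> 'k \<times> ('b \<Rightarrow> 'k) \<Rightarrow> 'k \<times> ('b \<Rightarrow> 'k)
    \<Rightarrow> ('b option \<times> 'b option) \<times> ('b option \<times> 'b option) \<Rightarrow> 'k" where
  "tens4 u1 u2 u3 u4 = tens (tens (ucoord u1) (ucoord u2)) (tens (ucoord u3) (ucoord u4))"

definition Rpure :: "(('b \<Rightarrow> 'k::field) \<Rightarrow> ('b \<Rightarrow> 'k) \<Rightarrow> ('b \<Rightarrow> 'k) \<Rightarrow> ('b \<Rightarrow> 'k))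
    \<Rightarrow> 'k \<times> ('b \<Rightarrow> 'k) \<Rightarrow> 'k \<times> ('b \<Rightarrow> 'k) \<Rightarrow> 'k \<times> ('b \<Rightarrow> 'k) \<Rightarrow> 'k \<times> ('b \<Rightarrow> 'k)
    \<Rightarrow> ('b option \<times> 'b option) \<times> ('b option \<times> 'b option) \<Rightarrow> 'k" where
  "Rpure br u1 u2 v1 v2 =
     vadd (tens4 v1 v2 u1 u2)
       (vadd (tens4 (1, \<lambda>_. 0) (1, \<lambda>_. 0) (0, br (snd u1) (snd v1) (snd v2)) u2)
             (tens4 (1, \<lambda>_. 0) (1, \<lambda>_. 0) u1 (0, br (snd u2) (snd v1) (snd v2))))"

definition Rmap :: "(('b \<Rightarrow> 'k::field) \<Rightarrow> ('b \<Rightarrow> 'k) \<Rightarrow> ('b \<Rightarrow> 'k) \<Rightarrow> ('b \<Rightarrow> 'k))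
    \<Rightarrow> (('b option \<times> 'b option) \<times> ('b option \<times> 'b option) \<Rightarrow> 'k)
    \<Rightarrow> ('b option \<times> 'b option) \<times> ('b option \<times> 'b option) \<Rightarrow> 'k" where
  "Rmap br = lin_ext (\<lambda>((p1, p2), (q1, q2)). Rpure br (ubasis p1) (ubasis p2) (ubasis q1) (ubasis q2))"

definition op12 :: "(('c \<times> 'c \<Rightarrow> 'k::comm_ring_1) \<Rightarrow> ('c \<times> 'c \<Rightarrow> 'k)) \<Rightarrow> ('c \<times> 'c \<times> 'c \<Rightarrow> 'k) \<Rightarrow> 'c \<times> 'c \<times> 'c \<Rightarrow> 'k" where
  "op12 R = lin_ext (\<lambda>(x, y, z). \<lambda>(u, v, w). R (delta (x, y)) (u, v) * delta z w)"

definition op23 :: "(('c \<times> 'c \<Rightarrow> 'k::comm_ring_1) \<Rightarrow> ('c \<times> 'c \<Rightarrow> 'k)) \<Rightarrow> ('c \<times> 'c \<times> 'c \<Rightarrow> 'k) \<Rightarrow> 'c \<times> 'c \<times> 'c \<Rightarrow> 'k" where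
  "op23 R = lin_ext (\<lambda>(x, y, z). \<lambda>(u, v, w). delta x u * R (delta (y, z)) (v, w))"

definition YBE_solution :: "'c set \<Rightarrow> (('c \<times> 'c \<Rightarrow> 'k::field) \<Rightarrow> ('c \<times> 'c \<Rightarrow> 'k)) \<Rightarrow> bool" where
  "YBE_solution I R \<longleftrightarrow>
     (\<forall>T\<in>fsp (I \<times> I). \<forall>S\<in>fsp (I \<times> I). \<forall>c.
         R (vadd T S) = vadd (R T) (R S) \<and> R (vsmult c T) = vsmult c (R T)) \<and>
     bij_betw R (fsp (I \<times> I)) (fsp (I \<times> I)) \<and>
     (\<forall>T\<in>fsp (I \<times> I \<times> I). op12 R (op23 R (op12 R T)) = op23 R (op12 R (op23 R T)))"

end

theory Submission
  imports Defs
begin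


lemma supp_vadd: "supp (vadd f g :: _ \<Rightarrow> 'k::comm_ring_1) \<subseteq> supp f \<union> supp g"
  by (auto simp: supp_def vadd_def)
lemma supp_vsmult: "supp (vsmult c f :: _ \<Rightarrow> 'k::comm_ring_1) \<subseteq> supp f"
  by (auto simp: supp_def vsmult_def)
lemma supp_delta[simp]: "supp (delta x :: _ \<Rightarrow> 'k::zero_neq_one) = {x}"
  by (auto simp: supp_def delta_def)
lemma supp_zero[simp]: "supp (\<lambda>_. 0) = {}"
  by (auto simp: supp_def)

lemma fsp_vadd: "f \<in> fsp I \<Longrightarrow> g \<in> fsp I \<Longrightarrow> (vadd f g :: _ \<Rightarrow> 'k::comm_ring_1) \<in> fsp I"
  using supp_vadd[of f g] by (auto simp: fsp_def intro: finite_subset)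
lemma fsp_vsmult: "f \<in> fsp I \<Longrightarrow> (vsmult c f :: _ \<Rightarrow> 'k::comm_ring_1) \<in> fsp I"
  using supp_vsmult[of c f] by (auto simp: fsp_def intro: finite_subset)
lemma fsp_delta: "x \<in> I \<Longrightarrow> (delta x :: _ \<Rightarrow> 'k::zero_neq_one) \<in> fsp I"
  by (auto simp: fsp_def)
lemma fsp_zero[simp]: "(\<lambda>_. 0) \<in> fsp I"
  by (auto simp: fsp_def)

lemma lin_ext_sum:
  assumes "finite S" "supp T \<subseteq> S"
  shows "lin_ext g T y = (\<Sum>x\<in>S. T x * g x y)"
  unfolding lin_ext_def
  by (rule sum.mono_neutral_left) (use assms in \<open>auto simp: supp_def\<close>)

lemma lin_ext_delta[simp]: "lin_ext g (delta x) = g x"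
  by (rule ext) (simp add: lin_ext_def, simp add: delta_def)

lemma lin_ext_vadd:
  assumes "finite (supp T)" "finite (supp S)"
  shows "lin_ext g (vadd T S) = vadd (lin_ext g T) (lin_ext g S)"
proof
  fix y
  let ?A = "supp T \<union> supp S"
  have "lin_ext g (vadd T S) y = (\<Sum>x\<in>?A. vadd T S x * g x y)"
    by (rule lin_ext_sum) (use assms supp_vadd[of T S] in auto)
  also have "\<dots> = (\<Sum>x\<in>?A. T x * g x y) + (\<Sum>x\<in>?A. S x * g x y)"
    by (simp add: vadd_def distrib_right sum.distrib)
  also have "\<dots> = lin_ext g T y + lin_ext g S y"
    using assms by (simp add: lin_ext_sum[of ?A])
  finally show "lin_ext g (vadd T S) y = vadd (lin_ext g T) (lin_ext g S) y"
    by (simp add: vadd_def)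
qed

lemma lin_ext_vsmult:
  assumes "finite (supp T)"
  shows "lin_ext g (vsmult c T) = vsmult c (lin_ext g T)"
proof
  fix y
  have "lin_ext g (vsmult c T) y = (\<Sum>x\<in>supp T. vsmult c T x * g x y)"
    by (rule lin_ext_sum) (use assms supp_vsmult[of c T] in auto)
  also have "\<dots> = c * lin_ext g T y"
    by (simp add: vsmult_def lin_ext_def sum_distrib_left mult.assoc)
  finally show "lin_ext g (vsmult c T) y = vsmult c (lin_ext g T) y"
    by (simp add: vsmult_def)
qed

definition linear_on :: "'a set \<Rightarrow> (('a \<Rightarrow> 'k::comm_ring_1) \<Rightarrow> ('c \<Rightarrow> 'k)) \<Rightarrow> bool" where
  "linear_on I L \<longleftrightarrow> (\<forall>f\<in>fsp I. \<forall>g\<in>fsp I. \<forall>c.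
      L (vadd f g) = vadd (L f) (L g) \<and> L (vsmult c f) = vsmult c (L f))"

lemma linear_on_lin_ext: "linear_on I (lin_ext g)"
  by (auto simp: linear_on_def fsp_def lin_ext_vadd lin_ext_vsmult)

lemma linear_on_zero:
  assumes "linear_on I L" shows "L (\<lambda>_. 0) = (\<lambda>_. 0)"
proof -
  have "L (vsmult 0 (\<lambda>_. 0)) = vsmult 0 (L (\<lambda>_. 0))"
    using assms fsp_zero[of I] unfolding linear_on_def by blast
  then show ?thesis by (simp add: vsmult_def)
qed

lemma linear_on_expand:
  assumes L: "linear_on I L" and S: "finite S" "S \<subseteq> I" and f: "supp f \<subseteq> S"
  shows "L f y = (\<Sum>x\<in>S. f x * L (delta x) y)"
  using S f
proof (induction S arbitrary: f rule: finite_induct)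
  case empty
  then have "f = (\<lambda>_. 0)" by (auto simp: supp_def)
  then show ?case using linear_on_zero[OF L] by simp
next
  case (insert a S)
  define f' where "f' = f(a := 0)"
  have sf': "supp f' \<subseteq> S" using insert.prems by (auto simp: f'_def supp_def)
  have fs1: "f' \<in> fsp I"
    using sf' insert.hyps insert.prems by (auto simp: fsp_def intro: finite_subset)
  have fs2: "vsmult (f a) (delta a) \<in> fsp I"
    by (intro fsp_vsmult fsp_delta) (use insert.prems in auto)
  note fs = fs1 fs2
  have "f = vadd (vsmult (f a) (delta a)) f'"
    by (auto simp: vadd_def vsmult_def delta_def f'_def)
  then have "L f = vadd (L (vsmult (f a) (delta a))) (L f')"
    using L fs unfolding linear_on_def by metis
  also have "L (vsmult (f a) (delta a)) = vsmult (f a) (L (delta a))"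
    using L fsp_delta[of a I] insert.prems unfolding linear_on_def by blast
  finally have "L f y = f a * L (delta a) y + L f' y"
    by (simp add: vadd_def vsmult_def)
  also have "L f' y = (\<Sum>x\<in>S. f' x * L (delta x) y)"
    using insert sf' by auto
  also have "\<dots> = (\<Sum>x\<in>S. f x * L (delta x) y)"
    using insert.hyps by (intro sum.cong) (auto simp: f'_def)
  finally show ?case using insert.hyps by simp
qed

lemma linear_on_lin_ext_eq:
  assumes "linear_on I L" "f \<in> fsp I"
  shows "L f = lin_ext (\<lambda>x. L (delta x)) f"
proof
  fix y
  have "finite (supp f)" "supp f \<subseteq> I" using assms(2) by (auto simp: fsp_def)
  then show "L f y = lin_ext (\<lambda>x. L (delta x)) f y"
    by (simp add: linear_on_expand[OF assms(1)] lin_ext_def)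
qed

lemma linear_on_basis_eq:
  assumes "linear_on I L" "linear_on I L'" "\<And>x. x \<in> I \<Longrightarrow> L (delta x) = L' (delta x)"
    "f \<in> fsp I"
  shows "L f = L' f"
proof -
  have "L f = lin_ext (\<lambda>x. L (delta x)) f" by (rule linear_on_lin_ext_eq) fact+
  also have "\<dots> = lin_ext (\<lambda>x. L' (delta x)) f"
    using assms(3,4) by (auto simp: lin_ext_def fsp_def intro!: ext sum.cong)
  also have "\<dots> = L' f" by (rule linear_on_lin_ext_eq[symmetric]) fact+
  finally show ?thesis .
qed

lemma lin_ext_fsp:
  assumes "T \<in> fsp I" "\<And>x. x \<in> I \<Longrightarrow> g x \<in> fsp J"
  shows "lin_ext g T \<in> fsp J"
proof -
  have "supp (lin_ext g T) \<subseteq> (\<Union>x\<in>supp T. supp (g x))"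
  proof (rule subsetI, rule ccontr)
    fix y assume a: "y \<in> supp (lin_ext g T)" and b: "y \<notin> (\<Union>x\<in>supp T. supp (g x))"
    then have "\<forall>x\<in>supp T. g x y = 0" by (auto simp: supp_def)
    then have "lin_ext g T y = 0" by (simp add: lin_ext_def)
    with a show False by (simp add: supp_def)
  qed
  moreover have "finite (\<Union>x\<in>supp T. supp (g x))" "(\<Union>x\<in>supp T. supp (g x)) \<subseteq> J"
    using assms by (auto simp: fsp_def)
  ultimately show ?thesis by (auto simp: fsp_def intro: finite_subset)
qed

lemma linear_on_fsp:
  assumes "linear_on I L" "\<And>x. x \<in> I \<Longrightarrow> L (delta x) \<in> fsp J" "f \<in> fsp I"
  shows "L f \<in> fsp J"
  using linear_on_lin_ext_eq[OF assms(1,3)] lin_ext_fsp[OF assms(3), of "\<lambda>x. L (delta x)"] assms(2)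
  by simp

definition bilinear_on :: "'a set \<Rightarrow> 'b set \<Rightarrow> (('a \<Rightarrow> 'k::comm_ring_1) \<Rightarrow> ('b \<Rightarrow> 'k) \<Rightarrow> ('c \<Rightarrow> 'k)) \<Rightarrow> bool" where
  "bilinear_on I J P \<longleftrightarrow> (\<forall>b\<in>fsp J. linear_on I (\<lambda>a. P a b)) \<and> (\<forall>a\<in>fsp I. linear_on J (P a))"

lemma bilinear_on_basis_eq:
  assumes "bilinear_on I J P" "bilinear_on I J Q"
    "\<And>x y. x \<in> I \<Longrightarrow> y \<in> J \<Longrightarrow> P (delta x) (delta y) = Q (delta x) (delta y)"
    "a \<in> fsp I" "b \<in> fsp J"
  shows "P a b = Q a b"
proof (rule linear_on_basis_eq[of I "\<lambda>a. P a b" "\<lambda>a. Q a b"])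
  show "linear_on I (\<lambda>a. P a b)" "linear_on I (\<lambda>a. Q a b)"
    using assms by (auto simp: bilinear_on_def)
  fix x assume x: "x \<in> I"
  show "P (delta x) b = Q (delta x) b"
    by (rule linear_on_basis_eq[of J]) (use assms x fsp_delta[OF x] in \<open>auto simp: bilinear_on_def\<close>)
qed fact

lemma supp_tens: "supp (tens a b :: _ \<Rightarrow> 'k::field) = supp a \<times> supp b"
  by (auto simp: supp_def tens_def)

lemma fsp_tens: "a \<in> fsp I \<Longrightarrow> b \<in> fsp J \<Longrightarrow> (tens a b :: _ \<Rightarrow> 'k::field) \<in> fsp (I \<times> J)"
  by (auto simp: fsp_def supp_tens)

lemma tens_delta: "tens (delta x) (delta y) = (delta (x,y) :: _ \<Rightarrow> 'k::comm_ring_1)"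
  by (auto simp: tens_def delta_def fun_eq_iff)

lemma tens_vadd1: "tens (vadd a a') b = (vadd (tens a b) (tens a' b) :: _ \<Rightarrow> 'k::comm_ring_1)"
  by (auto simp: tens_def vadd_def fun_eq_iff algebra_simps)
lemma tens_vadd2: "tens b (vadd a a') = (vadd (tens b a) (tens b a') :: _ \<Rightarrow> 'k::comm_ring_1)"
  by (auto simp: tens_def vadd_def fun_eq_iff algebra_simps)
lemma tens_vsmult1: "tens (vsmult c a) b = (vsmult c (tens a b) :: _ \<Rightarrow> 'k::comm_ring_1)"
  by (auto simp: tens_def vsmult_def fun_eq_iff algebra_simps)
lemma tens_vsmult2: "tens b (vsmult c a) = (vsmult c (tens b a) :: _ \<Rightarrow> 'k::comm_ring_1)"
  by (auto simp: tens_def vsmult_def fun_eq_iff algebra_simps)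
lemmas tens_lin = tens_vadd1 tens_vadd2 tens_vsmult1 tens_vsmult2

lemma bilinear_on_tens: "bilinear_on I J (tens :: _ \<Rightarrow> _ \<Rightarrow> _ \<Rightarrow> 'k::field)"
  by (auto simp: bilinear_on_def linear_on_def tens_def vadd_def vsmult_def algebra_simps)

lemma lin_ext_tens:
  assumes "bilinear_on I J P" "\<And>x y. x \<in> I \<Longrightarrow> y \<in> J \<Longrightarrow> g (x,y) = P (delta x) (delta y)"
    "a \<in> fsp I" "b \<in> fsp J"
  shows "lin_ext g (tens a b :: _ \<Rightarrow> 'k::field) = P a b"
proof -
  have "bilinear_on I J (\<lambda>a b. lin_ext g (tens a b))"
    using bilinear_on_tens[of I J]
    unfolding bilinear_on_def linear_on_def
    by (auto simp: tens_lin lin_ext_vadd lin_ext_vsmult supp_tens fsp_def)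
  then show ?thesis
    by (rule bilinear_on_basis_eq) (use assms in \<open>auto simp: tens_delta\<close>)
qed

lemma linear_on_comp:
  fixes L1 :: "('a \<Rightarrow> 'k::comm_ring_1) \<Rightarrow> ('b \<Rightarrow> 'k)" and L2 :: "('b \<Rightarrow> 'k) \<Rightarrow> ('c \<Rightarrow> 'k)"
  assumes "linear_on I L1" "\<And>f. f \<in> fsp I \<Longrightarrow> L1 f \<in> fsp J" "linear_on J L2"
  shows "linear_on I (\<lambda>f. L2 (L1 f))"
  unfolding linear_on_def
proof (intro ballI allI conjI)
  fix f g :: "'a \<Rightarrow> 'k" and c :: 'k assume f: "f \<in> fsp I" and g: "g \<in> fsp I"
  have "L1 (vadd f g) = vadd (L1 f) (L1 g)" "L1 (vsmult c f) = vsmult c (L1 f)"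
    using assms(1) f g by (auto simp: linear_on_def)
  moreover have "L1 f \<in> fsp J" "L1 g \<in> fsp J" using assms(2) f g by auto
  ultimately show "L2 (L1 (vadd f g)) = vadd (L2 (L1 f)) (L2 (L1 g))"
    "L2 (L1 (vsmult c f)) = vsmult c (L2 (L1 f))"
    using assms(3) by (auto simp: linear_on_def)
qed

lemma linear_on_vadd:
  assumes "linear_on I L1" "linear_on I L2"
  shows "linear_on I (\<lambda>f. vadd (L1 f) (L2 f) :: _ \<Rightarrow> 'k::comm_ring_1)"
  using assms unfolding linear_on_def by (auto simp: vadd_def vsmult_def fun_eq_iff algebra_simps)

lemma linear_on_id: "linear_on I (\<lambda>f. f)"
  by (simp add: linear_on_def)

lemma finite_supp_vadd: "finite (supp f) \<Longrightarrow> finite (supp g) \<Longrightarrow> finite (supp (vadd f g :: _ \<Rightarrow> 'k::comm_ring_1))"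
  using supp_vadd[of f g] by (auto intro: finite_subset)

lemma finite_supp_vsmult: "finite (supp f) \<Longrightarrow> finite (supp (vsmult c f :: _ \<Rightarrow> 'k::comm_ring_1))"
  using supp_vsmult[of c f] by (auto intro: finite_subset)

lemma interchange:
  assumes L1: "linear_on I L1" and L2: "linear_on J L2" and F: "F \<in> fsp (I \<times> J)"
  shows "L1 (\<lambda>s. L2 (\<lambda>t. F (s,t)) w2) w1 = L2 (\<lambda>t. L1 (\<lambda>s. F (s,t)) w1) w2"
proof -
  define S1 where "S1 = fst ` supp F"
  define S2 where "S2 = snd ` supp F"
  have S: "finite S1" "S1 \<subseteq> I" "finite S2" "S2 \<subseteq> J"
    using F by (auto simp: S1_def S2_def fsp_def)
  have r: "supp (\<lambda>t. F (s,t)) \<subseteq> S2" for s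
    by (force simp: supp_def S2_def)
  have c: "supp (\<lambda>s. F (s,t)) \<subseteq> S1" for t
    by (force simp: supp_def S1_def)
  have e1: "(\<lambda>s. L2 (\<lambda>t. F (s,t)) w2) = (\<lambda>s. \<Sum>t\<in>S2. F (s,t) * L2 (delta t) w2)"
    using linear_on_expand[OF L2 S(3,4) r] by simp
  have e2: "(\<lambda>t. L1 (\<lambda>s. F (s,t)) w1) = (\<lambda>t. \<Sum>s\<in>S1. F (s,t) * L1 (delta s) w1)"
    using linear_on_expand[OF L1 S(1,2) c] by simp
  have s1: "supp (\<lambda>s. \<Sum>t\<in>S2. F (s,t) * L2 (delta t) w2) \<subseteq> S1"
  proof
    fix s assume "s \<in> supp (\<lambda>s. \<Sum>t\<in>S2. F (s,t) * L2 (delta t) w2)"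
    then obtain t where "F (s,t) \<noteq> 0" by (force simp: supp_def intro: ccontr)
    then show "s \<in> S1" by (force simp: S1_def supp_def)
  qed
  have s2: "supp (\<lambda>t. \<Sum>s\<in>S1. F (s,t) * L1 (delta s) w1) \<subseteq> S2"
  proof
    fix t assume "t \<in> supp (\<lambda>t. \<Sum>s\<in>S1. F (s,t) * L1 (delta s) w1)"
    then obtain s where "F (s,t) \<noteq> 0" by (force simp: supp_def intro: ccontr)
    then show "t \<in> S2" by (force simp: S2_def supp_def)
  qed
  have "L1 (\<lambda>s. L2 (\<lambda>t. F (s,t)) w2) w1 = (\<Sum>s\<in>S1. (\<Sum>t\<in>S2. F (s,t) * L2 (delta t) w2) * L1 (delta s) w1)"
    unfolding e1 by (rule linear_on_expand[OF L1 S(1,2) s1])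
  also have "\<dots> = (\<Sum>s\<in>S1. \<Sum>t\<in>S2. F (s,t) * L1 (delta s) w1 * L2 (delta t) w2)"
    by (intro sum.cong refl) (simp add: sum_distrib_left mult_ac)
  also have "\<dots> = (\<Sum>t\<in>S2. \<Sum>s\<in>S1. F (s,t) * L1 (delta s) w1 * L2 (delta t) w2)"
    by (rule sum.swap)
  also have "\<dots> = (\<Sum>t\<in>S2. (\<Sum>s\<in>S1. F (s,t) * L1 (delta s) w1) * L2 (delta t) w2)"
    by (simp add: sum_distrib_right)
  also have "\<dots> = L2 (\<lambda>t. L1 (\<lambda>s. F (s,t)) w1) w2"
    unfolding e2 by (rule linear_on_expand[OF L2 S(3,4) s2, symmetric])
  finally show ?thesis .
qed



definition dv :: "'b option \<Rightarrow> 'b \<Rightarrow> 'k::zero_neq_one" where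
  "dv p = (\<lambda>c. delta p (Some c))"

definition ad :: "(('b \<Rightarrow> 'k::field) \<Rightarrow> ('b \<Rightarrow> 'k) \<Rightarrow> ('b \<Rightarrow> 'k) \<Rightarrow> ('b \<Rightarrow> 'k))
   \<Rightarrow> ('b \<Rightarrow> 'k) \<Rightarrow> ('b \<Rightarrow> 'k) \<Rightarrow> ('b option \<Rightarrow> 'k) \<Rightarrow> ('b option \<Rightarrow> 'k)" where
  "ad br y1 y2 f = ucoord (0, br (\<lambda>c. f (Some c)) y1 y2)"

definition Ad :: "(('b \<Rightarrow> 'k::field) \<Rightarrow> ('b \<Rightarrow> 'k) \<Rightarrow> ('b \<Rightarrow> 'k) \<Rightarrow> ('b \<Rightarrow> 'k))
   \<Rightarrow> ('b \<Rightarrow> 'k) \<Rightarrow> ('b \<Rightarrow> 'k) \<Rightarrow> ('b option \<times> 'b option \<Rightarrow> 'k) \<Rightarrow> ('b option \<times> 'b option \<Rightarrow> 'k)" where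
  "Ad br y1 y2 F = (\<lambda>(w1,w2). ad br y1 y2 (\<lambda>s. F (s,w2)) w1 + ad br y1 y2 (\<lambda>s. F (w1,s)) w2)"

definition Dv :: "(('b \<Rightarrow> 'k::field) \<Rightarrow> ('b \<Rightarrow> 'k) \<Rightarrow> ('b \<Rightarrow> 'k) \<Rightarrow> ('b \<Rightarrow> 'k))
   \<Rightarrow> ('b option \<times> 'b option \<Rightarrow> 'k) \<Rightarrow> ('b option \<times> 'b option \<Rightarrow> 'k) \<Rightarrow> ('b option \<times> 'b option \<Rightarrow> 'k)" where
  "Dv br F G = lin_ext (\<lambda>q. Ad br (dv (fst q)) (dv (snd q)) F) G"

definition ee :: "'b option \<times> 'b option \<Rightarrow> 'k::zero_neq_one" where
  "ee = delta (None, None)"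

lemma fsp_Some: "f \<in> fsp (ubar_idx B) \<Longrightarrow> (\<lambda>c. f (Some c)) \<in> fsp B"
proof -
  assume f: "f \<in> fsp (ubar_idx B)"
  have "supp (\<lambda>c. f (Some c)) = Some -` supp f" by (auto simp: supp_def)
  moreover have "finite (Some -` supp f)" using f by (auto simp: fsp_def intro: finite_vimageI)
  moreover have "Some -` supp f \<subseteq> B" using f by (auto simp: fsp_def ubar_idx_def)
  ultimately show ?thesis by (simp add: fsp_def)
qed

lemma fsp_ucoord0: "v \<in> fsp B \<Longrightarrow> ucoord (0, v) \<in> fsp (ubar_idx B)"
proof -
  assume v: "v \<in> fsp B"
  have "supp (ucoord (0, v)) \<subseteq> Some ` supp v"
    by (auto simp: supp_def ucoord_def split: option.splits)
  then show ?thesis using v by (auto simp: fsp_def ubar_idx_def intro: finite_subset)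
qed

lemma dv_None[simp]: "dv None = (\<lambda>_. 0)"
  by (simp add: dv_def delta_def)
lemma dv_Some[simp]: "dv (Some b) = delta b"
  by (auto simp: dv_def delta_def fun_eq_iff)
lemma fsp_dv: "p \<in> ubar_idx B \<Longrightarrow> dv p \<in> fsp B"
  by (auto simp: ubar_idx_def fsp_delta)

lemma ucoord_ubasis: "ucoord (ubasis p) = delta p"
  by (auto simp: ucoord_def ubasis_def delta_def fun_eq_iff split: option.splits)
lemma ucoord_one: "ucoord (1, \<lambda>_. 0) = delta None"
  by (auto simp: ucoord_def delta_def fun_eq_iff split: option.splits)
lemma snd_ubasis: "snd (ubasis p) = dv p"
  by (cases p) (auto simp: ubasis_def)

lemma ucoord0_vadd: "ucoord (0, vadd u v) = vadd (ucoord (0,u)) (ucoord (0, v) :: _ \<Rightarrow> 'k::comm_ring_1)"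
  by (auto simp: ucoord_def vadd_def fun_eq_iff split: option.splits)
lemma ucoord0_vsmult: "ucoord (0, vsmult c u) = vsmult c (ucoord (0,u) :: _ \<Rightarrow> 'k::comm_ring_1)"
  by (auto simp: ucoord_def vsmult_def fun_eq_iff split: option.splits)
lemma ucoord0_zero[simp]: "ucoord (0, \<lambda>_. 0) = (\<lambda>_. 0)"
  by (auto simp: ucoord_def fun_eq_iff split: option.splits)
lemma ucoord0_Some[simp]: "ucoord (0, v) (Some b) = v b" and ucoord0_None[simp]: "ucoord (0, v) None = 0"
  by (auto simp: ucoord_def)

lemma fsp_col': "F \<in> fsp (I \<times> J) \<Longrightarrow> (\<lambda>s. F (s,w)) \<in> fsp I"
proof -
  assume F: "F \<in> fsp (I \<times> J)"
  have "supp (\<lambda>s. F (s,w)) \<subseteq> fst ` supp F" by (force simp: supp_def)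
  moreover have "fst ` supp F \<subseteq> I" "finite (fst ` supp F)" using F by (auto simp: fsp_def)
  ultimately show ?thesis unfolding fsp_def by (auto intro: finite_subset)
qed
lemma fsp_row': "F \<in> fsp (I \<times> J) \<Longrightarrow> (\<lambda>s. F (w,s)) \<in> fsp J"
proof -
  assume F: "F \<in> fsp (I \<times> J)"
  have "supp (\<lambda>s. F (w,s)) \<subseteq> snd ` supp F" by (force simp: supp_def)
  moreover have "snd ` supp F \<subseteq> J" "finite (snd ` supp F)" using F by (auto simp: fsp_def)
  ultimately show ?thesis unfolding fsp_def by (auto intro: finite_subset)
qed

definition t3 :: "('c \<Rightarrow> 'k::comm_ring_1) \<Rightarrow> ('c \<Rightarrow> 'k) \<Rightarrow> ('c \<Rightarrow> 'k) \<Rightarrow> 'c \<times> 'c \<times> 'c \<Rightarrow> 'k" where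
  "t3 a b c = (\<lambda>(u,v,w). a u * b v * c w)"

lemma supp_t3: "supp (t3 a b c) \<subseteq> supp a \<times> supp b \<times> supp c"
  by (auto simp: supp_def t3_def)

lemma finite_supp_t3: "finite (supp a) \<Longrightarrow> finite (supp b) \<Longrightarrow> finite (supp c) \<Longrightarrow> finite (supp (t3 a b c))"
  using supp_t3[of a b c] by (auto intro: finite_subset)

lemma fsp_t3: "a \<in> fsp I \<Longrightarrow> b \<in> fsp I \<Longrightarrow> c \<in> fsp I \<Longrightarrow> t3 a b c \<in> fsp (I \<times> I \<times> I)"
  using supp_t3[of a b c] unfolding fsp_def by (auto intro: finite_subset)

lemma t3_delta: "t3 (delta x) (delta y) (delta z) = (delta (x,y,z) :: _ \<Rightarrow> 'k::comm_ring_1)"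
  by (auto simp: t3_def delta_def fun_eq_iff)

lemma supp_tens_sub: "supp (tens a b :: _ \<Rightarrow> 'k::comm_ring_1) \<subseteq> supp a \<times> supp b"
  by (auto simp: supp_def tens_def)

lemma sum_delta_supp: "finite (supp (c :: _ \<Rightarrow> 'k::comm_ring_1)) \<Longrightarrow> (\<Sum>z\<in>supp c. c z * delta z w) = c w"
proof -
  assume "finite (supp c)"
  have "(\<Sum>z\<in>supp c. c z * delta z w) = (\<Sum>z\<in>supp c. if w = z then c z else 0)"
    by (rule sum.cong) (auto simp: delta_def)
  also have "\<dots> = c w" using \<open>finite (supp c)\<close> by (simp add: supp_def)
  finally show ?thesis .
qed

lemma op12_t3:
  assumes R: "R = lin_ext g" and fin: "finite (supp a)" "finite (supp b)" "finite (supp c)"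
  shows "op12 R (t3 a b c) = (\<lambda>(u,v,w). R (tens a b) (u,v) * c w)"
proof -
  have "op12 R (t3 a b c) (u,v,w) = R (tens a b) (u,v) * c w" for u v w
  proof -
  have "op12 R (t3 a b c) (u,v,w) = (\<Sum>p\<in>supp a \<times> supp b \<times> supp c.
      t3 a b c p * (case p of (x,y,z) \<Rightarrow> \<lambda>(u,v,w). R (delta (x,y)) (u,v) * delta z w) (u,v,w))"
    unfolding op12_def by (rule lin_ext_sum) (use fin supp_t3 in auto)
  also have "\<dots> = (\<Sum>x\<in>supp a. \<Sum>y\<in>supp b. \<Sum>z\<in>supp c. a x * b y * c z * (g (x,y) (u,v) * delta z w))"
    by (simp add: sum.cartesian_product' t3_def R)
  also have "\<dots> = (\<Sum>x\<in>supp a. \<Sum>y\<in>supp b. a x * b y * g (x,y) (u,v)) * (\<Sum>z\<in>supp c. c z * delta z w)"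
    by (simp add: sum_distrib_left sum_distrib_right mult_ac)
  also have "\<dots> = R (tens a b) (u,v) * c w"
  proof -
    have "R (tens a b) (u,v) = (\<Sum>x\<in>supp a. \<Sum>y\<in>supp b. a x * b y * g (x,y) (u,v))"
      unfolding R by (subst lin_ext_sum[OF _ supp_tens_sub]) (auto simp: fin sum.cartesian_product' tens_def)
    then show ?thesis using fin by (simp add: sum_delta_supp)
  qed
  finally show ?thesis .
  qed
  then show ?thesis by (auto simp: fun_eq_iff)
qed

lemma op23_t3:
  assumes R: "R = lin_ext g" and fin: "finite (supp a)" "finite (supp b)" "finite (supp c)"
  shows "op23 R (t3 a b c) = (\<lambda>(u,v,w). a u * R (tens b c) (v,w))"
proof -
  have "op23 R (t3 a b c) (u,v,w) = a u * R (tens b c) (v,w)" for u v w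
  proof -
  have "op23 R (t3 a b c) (u,v,w) = (\<Sum>p\<in>supp a \<times> supp b \<times> supp c.
      t3 a b c p * (case p of (x,y,z) \<Rightarrow> \<lambda>(u,v,w). delta x u * R (delta (y,z)) (v,w)) (u,v,w))"
    unfolding op23_def by (rule lin_ext_sum) (use fin supp_t3 in auto)
  also have "\<dots> = (\<Sum>x\<in>supp a. \<Sum>y\<in>supp b. \<Sum>z\<in>supp c. a x * b y * c z * (delta x u * g (y,z) (v,w)))"
    by (simp add: sum.cartesian_product' t3_def R)
  also have "\<dots> = (\<Sum>x\<in>supp a. a x * delta x u * (\<Sum>y\<in>supp b. \<Sum>z\<in>supp c. b y * c z * g (y,z) (v,w)))"
    by (simp add: sum_distrib_left mult_ac)
  also have "\<dots> = (\<Sum>x\<in>supp a. a x * delta x u) * (\<Sum>y\<in>supp b. \<Sum>z\<in>supp c. b y * c z * g (y,z) (v,w))"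
    by (simp add: sum_distrib_right)
  also have "\<dots> = a u * R (tens b c) (v,w)"
  proof -
    have "R (tens b c) (v,w) = (\<Sum>y\<in>supp b. \<Sum>z\<in>supp c. b y * c z * g (y,z) (v,w))"
      unfolding R by (subst lin_ext_sum[OF _ supp_tens_sub]) (auto simp: fin sum.cartesian_product' tens_def)
    then show ?thesis using fin by (simp add: sum_delta_supp)
  qed
  finally show ?thesis .
  qed
  then show ?thesis by (auto simp: fun_eq_iff)
qed

lemma op12_vadd: "finite (supp X) \<Longrightarrow> finite (supp Y) \<Longrightarrow> op12 R (vadd X Y) = vadd (op12 R X) (op12 R Y)"
  by (simp add: op12_def lin_ext_vadd)
lemma op23_vadd: "finite (supp X) \<Longrightarrow> finite (supp Y) \<Longrightarrow> op23 R (vadd X Y) = vadd (op23 R X) (op23 R Y)"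
  by (simp add: op23_def lin_ext_vadd)

context
  fixes B :: "'b set"
    and br :: "('b \<Rightarrow> 'k::field) \<Rightarrow> ('b \<Rightarrow> 'k) \<Rightarrow> ('b \<Rightarrow> 'k) \<Rightarrow> ('b \<Rightarrow> 'k)"
  assumes L: "leibniz3 B br"
begin

lemma br_fsp: "x \<in> fsp B \<Longrightarrow> y \<in> fsp B \<Longrightarrow> z \<in> fsp B \<Longrightarrow> br x y z \<in> fsp B"
  using L by (auto simp: leibniz3_def trilinear_on_def)

lemma br_lin:
  assumes "x \<in> fsp B" "x' \<in> fsp B" "y \<in> fsp B" "z \<in> fsp B"
  shows "br (vadd x x') y z = vadd (br x y z) (br x' y z)"
    "br (vsmult c x) y z = vsmult c (br x y z)"
    "br y (vadd x x') z = vadd (br y x z) (br y x' z)"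
    "br y (vsmult c x) z = vsmult c (br y x z)"
    "br y z (vadd x x') = vadd (br y z x) (br y z x')"
    "br y z (vsmult c x) = vsmult c (br y z x)"
  using L assms unfolding leibniz3_def trilinear_on_def by blast+

lemma br_zero:
  assumes "x \<in> fsp B" "y \<in> fsp B"
  shows "br (\<lambda>_. 0) x y = (\<lambda>_. 0)" "br x (\<lambda>_. 0) y = (\<lambda>_. 0)" "br x y (\<lambda>_. 0) = (\<lambda>_. 0)"
proof -
  have z: "(\<lambda>_. 0) = vsmult 0 (\<lambda>_. 0::'k)" by (simp add: vsmult_def)
  show "br (\<lambda>_. 0) x y = (\<lambda>_. 0)"
    by (subst z, subst br_lin(2)) (use assms in \<open>auto simp: vsmult_def\<close>)
  show "br x (\<lambda>_. 0) y = (\<lambda>_. 0)"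
    by (subst z, subst br_lin(4)) (use assms in \<open>auto simp: vsmult_def\<close>)
  show "br x y (\<lambda>_. 0) = (\<lambda>_. 0)"
    by (subst z, subst br_lin(6)) (use assms in \<open>auto simp: vsmult_def\<close>)
qed

lemma br_leib:
  assumes "x \<in> fsp B" "y1 \<in> fsp B" "y2 \<in> fsp B" "z1 \<in> fsp B" "z2 \<in> fsp B"
  shows "br (br x y1 y2) z1 z2 = vadd (vadd (br (br x z1 z2) y1 y2) (br x (br y1 z1 z2) y2)) (br x y1 (br y2 z1 z2))"
  using L assms unfolding leibniz3_def by blast

abbreviation "U \<equiv> ubar_idx B"

lemma ad_fsp: "f \<in> fsp U \<Longrightarrow> y1 \<in> fsp B \<Longrightarrow> y2 \<in> fsp B \<Longrightarrow> ad br y1 y2 f \<in> fsp U"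
  unfolding ad_def by (intro fsp_ucoord0 br_fsp fsp_Some)

lemma Some_vadd: "(\<lambda>c. vadd f g (Some c)) = vadd (\<lambda>c. f (Some c)) (\<lambda>c. g (Some c))"
  by (simp add: vadd_def)
lemma Some_vsmult: "(\<lambda>c. vsmult a f (Some c)) = vsmult a (\<lambda>c. f (Some c))"
  by (simp add: vsmult_def)

lemma ad_linear: "y1 \<in> fsp B \<Longrightarrow> y2 \<in> fsp B \<Longrightarrow> linear_on U (ad br y1 y2)"
  unfolding linear_on_def ad_def
  by (simp add: Some_vadd Some_vsmult br_lin fsp_Some ucoord0_vadd ucoord0_vsmult)

lemma ad_linear1: "f \<in> fsp U \<Longrightarrow> y2 \<in> fsp B \<Longrightarrow> linear_on B (\<lambda>y1. ad br y1 y2 f)"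
  unfolding linear_on_def ad_def
  by (simp add: br_lin fsp_Some ucoord0_vadd ucoord0_vsmult)

lemma ad_linear2: "f \<in> fsp U \<Longrightarrow> y1 \<in> fsp B \<Longrightarrow> linear_on B (\<lambda>y2. ad br y1 y2 f)"
  unfolding linear_on_def ad_def
  by (simp add: br_lin fsp_Some ucoord0_vadd ucoord0_vsmult)

lemma ad_Some: "(\<lambda>c. ad br y1 y2 f (Some c)) = br (\<lambda>c. f (Some c)) y1 y2"
  by (simp add: ad_def)

lemma ad_leib:
  assumes f: "f \<in> fsp U" and y: "y1 \<in> fsp B" "y2 \<in> fsp B" and z: "z1 \<in> fsp B" "z2 \<in> fsp B"
  shows "ad br z1 z2 (ad br y1 y2 f) =
     vadd (vadd (ad br y1 y2 (ad br z1 z2 f)) (ad br (br y1 z1 z2) y2 f)) (ad br y1 (br y2 z1 z2) f)"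
proof -
  define x where "x = (\<lambda>c. f (Some c))"
  have x: "x \<in> fsp B" using fsp_Some[OF f] by (simp add: x_def)
  have "ad br z1 z2 (ad br y1 y2 f) = ucoord (0, br (br x y1 y2) z1 z2)"
    by (simp add: ad_def[of br z1 z2] ad_Some x_def)
  also have "br (br x y1 y2) z1 z2 = vadd (vadd (br (br x z1 z2) y1 y2) (br x (br y1 z1 z2) y2)) (br x y1 (br y2 z1 z2))"
    by (rule br_leib[OF x y z])
  also have "ucoord (0, vadd (vadd (br (br x z1 z2) y1 y2) (br x (br y1 z1 z2) y2)) (br x y1 (br y2 z1 z2)))
     = vadd (vadd (ucoord (0, br (br x z1 z2) y1 y2)) (ucoord (0, br x (br y1 z1 z2) y2))) (ucoord (0, br x y1 (br y2 z1 z2)))"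
    by (simp only: ucoord0_vadd)
  also have "ucoord (0, br (br x z1 z2) y1 y2) = ad br y1 y2 (ad br z1 z2 f)"
    by (simp add: ad_def[of br y1 y2] ad_Some x_def)
  also have "ucoord (0, br x (br y1 z1 z2) y2) = ad br (br y1 z1 z2) y2 f"
    by (simp add: ad_def x_def)
  also have "ucoord (0, br x y1 (br y2 z1 z2)) = ad br y1 (br y2 z1 z2) f"
    by (simp add: ad_def x_def)
  finally show ?thesis .
qed

abbreviation "I \<equiv> U \<times> U"

lemma ad_vadd: "y1 \<in> fsp B \<Longrightarrow> y2 \<in> fsp B \<Longrightarrow> f \<in> fsp U \<Longrightarrow> g \<in> fsp U \<Longrightarrow>
   ad br y1 y2 (vadd f g) = vadd (ad br y1 y2 f) (ad br y1 y2 g)"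
  using ad_linear unfolding linear_on_def by blast
lemma ad_vsmult: "y1 \<in> fsp B \<Longrightarrow> y2 \<in> fsp B \<Longrightarrow> f \<in> fsp U \<Longrightarrow>
   ad br y1 y2 (vsmult c f) = vsmult c (ad br y1 y2 f)"
  using ad_linear unfolding linear_on_def by blast

lemma col_vadd: "(\<lambda>s. vadd F G (s,w)) = vadd (\<lambda>s. F (s,w)) (\<lambda>s. G (s,w))"
  and row_vadd: "(\<lambda>s. vadd F G (w,s)) = vadd (\<lambda>s. F (w,s)) (\<lambda>s. G (w,s))"
  and col_vsmult: "(\<lambda>s. vsmult c F (s,w)) = vsmult c (\<lambda>s. F (s,w))"
  and row_vsmult: "(\<lambda>s. vsmult c F (w,s)) = vsmult c (\<lambda>s. F (w,s))"
  by (simp_all add: vadd_def vsmult_def)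

lemma Ad_linear: "y1 \<in> fsp B \<Longrightarrow> y2 \<in> fsp B \<Longrightarrow> linear_on I (Ad br y1 y2)"
  unfolding linear_on_def
  by (auto simp: Ad_def col_vadd row_vadd col_vsmult row_vsmult ad_vadd ad_vsmult fsp_col' fsp_row'
      fun_eq_iff vadd_def[of "ad br y1 y2 _"] vsmult_def[of _ "ad br y1 y2 _"] algebra_simps)
     (auto simp: vadd_def vsmult_def algebra_simps)

lemma ad_lin12:
  assumes "f \<in> fsp U" "a \<in> fsp B" "b \<in> fsp B" "y \<in> fsp B"
  shows "ad br (vadd a b) y f = vadd (ad br a y f) (ad br b y f)"
    "ad br (vsmult c a) y f = vsmult c (ad br a y f)"
    "ad br y (vadd a b) f = vadd (ad br y a f) (ad br y b f)"
    "ad br y (vsmult c a) f = vsmult c (ad br y a f)"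
  using assms by (simp_all add: ad_def br_lin fsp_Some ucoord0_vadd ucoord0_vsmult)

lemma Ad_linear1: assumes F: "F \<in> fsp I" and y: "y2 \<in> fsp B" shows "linear_on B (\<lambda>y1. Ad br y1 y2 F)"
  using F y unfolding linear_on_def
  by (auto simp: Ad_def fun_eq_iff ad_lin12 fsp_col'[OF F] fsp_row'[OF F] vadd_def[of "ad br _ _ _"] vsmult_def[of _ "ad br _ _ _"] algebra_simps)
     (auto simp: vadd_def vsmult_def algebra_simps)

lemma Ad_linear2: assumes F: "F \<in> fsp I" and y: "y1 \<in> fsp B" shows "linear_on B (\<lambda>y2. Ad br y1 y2 F)"
  using F y unfolding linear_on_def
  by (auto simp: Ad_def fun_eq_iff ad_lin12 fsp_col'[OF F] fsp_row'[OF F] vadd_def[of "ad br _ _ _"] vsmult_def[of _ "ad br _ _ _"] algebra_simps)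
     (auto simp: vadd_def vsmult_def algebra_simps)

lemma Ad_delta:
  assumes "y1 \<in> fsp B" "y2 \<in> fsp B" "x1 \<in> U" "x2 \<in> U"
  shows "Ad br y1 y2 (delta (x1,x2)) = vadd (tens (ad br y1 y2 (delta x1)) (delta x2)) (tens (delta x1) (ad br y1 y2 (delta x2)))"
proof -
  have c: "(\<lambda>s. delta (x1,x2) (s,w) :: 'k) = vsmult (delta x2 w) (delta x1)" for w :: "'b option"
    by (auto simp: delta_def vsmult_def fun_eq_iff)
  have r: "(\<lambda>s. delta (x1,x2) (w,s) :: 'k) = vsmult (delta x1 w) (delta x2)" for w :: "'b option"
    by (auto simp: delta_def vsmult_def fun_eq_iff)
  show ?thesis
    unfolding Ad_def c r
    by (simp add: ad_vsmult assms fsp_delta) (auto simp: fun_eq_iff vadd_def tens_def vsmult_def mult.commute)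
qed

lemma Ad_fsp: "y1 \<in> fsp B \<Longrightarrow> y2 \<in> fsp B \<Longrightarrow> F \<in> fsp I \<Longrightarrow> Ad br y1 y2 F \<in> fsp I"
  by (rule linear_on_fsp[OF Ad_linear]) (auto simp: Ad_delta intro!: fsp_vadd fsp_tens ad_fsp fsp_delta)

lemma ee_col: "(\<lambda>s. ee (s,w)) = (vsmult (delta None w) (delta None) :: _ \<Rightarrow> 'k)"
  and ee_row: "(\<lambda>s. ee (w,s)) = (vsmult (delta None w) (delta None) :: _ \<Rightarrow> 'k)"
  by (auto simp: ee_def delta_def vsmult_def fun_eq_iff)

lemma ad_None: "y1 \<in> fsp B \<Longrightarrow> y2 \<in> fsp B \<Longrightarrow> ad br y1 y2 (delta None) = (\<lambda>_. 0)"
  using br_zero(1) by (simp add: ad_def dv_def[symmetric])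

lemma Ad_ee: "y1 \<in> fsp B \<Longrightarrow> y2 \<in> fsp B \<Longrightarrow> Ad br y1 y2 ee = (\<lambda>_. 0)"
  unfolding Ad_def ee_col ee_row
  by (simp add: ad_vsmult ad_None fsp_delta ubar_idx_def) (simp add: vsmult_def fun_eq_iff)

lemma Ad_zero1: "y2 \<in> fsp B \<Longrightarrow> F \<in> fsp I \<Longrightarrow> Ad br (\<lambda>_. 0) y2 F = (\<lambda>_. 0)"
  using linear_on_zero[OF Ad_linear1] by blast
lemma Ad_zero2: "y1 \<in> fsp B \<Longrightarrow> F \<in> fsp I \<Longrightarrow> Ad br y1 (\<lambda>_. 0) F = (\<lambda>_. 0)"
  using linear_on_zero[OF Ad_linear2] by blast

lemma fsp_rowmap:
  assumes "linear_on U L" "F \<in> fsp I"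
  shows "(\<lambda>s. L (\<lambda>t. F (s,t)) w) \<in> fsp U"
proof -
  have "supp (\<lambda>s. L (\<lambda>t. F (s,t)) w) \<subseteq> fst ` supp F"
  proof
    fix s assume s: "s \<in> supp (\<lambda>s. L (\<lambda>t. F (s,t)) w)"
    show "s \<in> fst ` supp F"
    proof (rule ccontr)
      assume "s \<notin> fst ` supp F"
      then have "(\<lambda>t. F (s,t)) = (\<lambda>_. 0)" by (force simp: supp_def fun_eq_iff)
      with s linear_on_zero[OF assms(1)] show False by (simp add: supp_def)
    qed
  qed
  moreover have "fst ` supp F \<subseteq> U" "finite (fst ` supp F)" using assms(2) by (auto simp: fsp_def)
  ultimately show ?thesis unfolding fsp_def by (auto intro: finite_subset)
qed

lemma fsp_colmap:
  assumes "linear_on U L" "F \<in> fsp I"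
  shows "(\<lambda>s. L (\<lambda>t. F (t,s)) w) \<in> fsp U"
proof -
  have "supp (\<lambda>s. L (\<lambda>t. F (t,s)) w) \<subseteq> snd ` supp F"
  proof
    fix s assume s: "s \<in> supp (\<lambda>s. L (\<lambda>t. F (t,s)) w)"
    show "s \<in> snd ` supp F"
    proof (rule ccontr)
      assume "s \<notin> snd ` supp F"
      then have "(\<lambda>t. F (t,s)) = (\<lambda>_. 0)" by (force simp: supp_def fun_eq_iff)
      with s linear_on_zero[OF assms(1)] show False by (simp add: supp_def)
    qed
  qed
  moreover have "snd ` supp F \<subseteq> U" "finite (snd ` supp F)" using assms(2) by (auto simp: fsp_def)
  ultimately show ?thesis unfolding fsp_def by (auto intro: finite_subset)
qed

lemma fsp_transpose: "F \<in> fsp (U \<times> U) \<Longrightarrow> (\<lambda>(s,t). F (t,s)) \<in> fsp (U \<times> U)"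
proof -
  assume F: "F \<in> fsp (U \<times> U)"
  have "supp (\<lambda>(s,t). F (t,s)) = (\<lambda>(a,b). (b,a)) ` supp F"
    by (auto simp: supp_def image_iff)
  then show ?thesis using F by (auto simp: fsp_def)
qed

lemma Ad_comm:
  assumes F: "F \<in> fsp I" and y: "y1 \<in> fsp B" "y2 \<in> fsp B" and z: "z1 \<in> fsp B" "z2 \<in> fsp B"
  shows "Ad br z1 z2 (Ad br y1 y2 F) =
    vadd (vadd (Ad br y1 y2 (Ad br z1 z2 F)) (Ad br (br y1 z1 z2) y2 F)) (Ad br y1 (br y2 z1 z2) F)"
proof (rule ext, clarify)
  fix w1 w2
  let ?ay = "ad br y1 y2" and ?az = "ad br z1 z2"
  have Ly: "linear_on U ?ay" and Lz: "linear_on U ?az" using ad_linear y z by auto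
  have cF: "(\<lambda>s. F (s,w)) \<in> fsp U" and rF: "(\<lambda>s. F (w,s)) \<in> fsp U" for w
    using fsp_col'[OF F] fsp_row'[OF F] by auto
  have FT: "(\<lambda>(s,t). F (t,s)) \<in> fsp I" using fsp_transpose[OF F] .
  have gen: "Ad br a1 a2 (Ad br b1 b2 F) (w1,w2) =
      ad br a1 a2 (ad br b1 b2 (\<lambda>s. F (s,w2))) w1 + ad br a1 a2 (\<lambda>s. ad br b1 b2 (\<lambda>t. F (s,t)) w2) w1
    + ad br a1 a2 (\<lambda>s. ad br b1 b2 (\<lambda>t. F (t,s)) w1) w2 + ad br a1 a2 (ad br b1 b2 (\<lambda>s. F (w1,s))) w2"
    if ab: "a1 \<in> fsp B" "a2 \<in> fsp B" "b1 \<in> fsp B" "b2 \<in> fsp B" for a1 a2 b1 b2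
  proof -
    have Lb: "linear_on U (ad br b1 b2)" using ad_linear ab by auto
    have e1: "(\<lambda>s. Ad br b1 b2 F (s,w2)) = vadd (ad br b1 b2 (\<lambda>s. F (s,w2))) (\<lambda>s. ad br b1 b2 (\<lambda>t. F (s,t)) w2)"
      by (simp add: Ad_def vadd_def)
    have e2: "(\<lambda>s. Ad br b1 b2 F (w1,s)) = vadd (\<lambda>s. ad br b1 b2 (\<lambda>t. F (t,s)) w1) (ad br b1 b2 (\<lambda>s. F (w1,s)))"
      by (simp add: Ad_def vadd_def)
    show ?thesis
      unfolding Ad_def[of br a1 a2] split e1 e2
      by (simp add: ad_vadd ab ad_fsp cF rF fsp_rowmap[OF Lb F] fsp_colmap[OF Lb F]) (simp add: vadd_def)
  qed
  have i1: "?az (\<lambda>s. ?ay (\<lambda>t. F (s,t)) w2) w1 = ?ay (\<lambda>t. ?az (\<lambda>s. F (s,t)) w1) w2"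
    by (rule interchange[OF Lz Ly F])
  have i2: "?az (\<lambda>s. ?ay (\<lambda>t. F (t,s)) w1) w2 = ?ay (\<lambda>t. ?az (\<lambda>s. F (t,s)) w2) w1"
    using interchange[OF Lz Ly FT, of w1 w2] by simp
  have d1: "?az (?ay (\<lambda>s. F (s,w2))) w1 = ?ay (?az (\<lambda>s. F (s,w2))) w1
      + ad br (br y1 z1 z2) y2 (\<lambda>s. F (s,w2)) w1 + ad br y1 (br y2 z1 z2) (\<lambda>s. F (s,w2)) w1"
    using ad_leib[OF cF y z] by (simp add: vadd_def)
  have d2: "?az (?ay (\<lambda>s. F (w1,s))) w2 = ?ay (?az (\<lambda>s. F (w1,s))) w2
      + ad br (br y1 z1 z2) y2 (\<lambda>s. F (w1,s)) w2 + ad br y1 (br y2 z1 z2) (\<lambda>s. F (w1,s)) w2"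
    using ad_leib[OF rF y z] by (simp add: vadd_def)
  show "Ad br z1 z2 (Ad br y1 y2 F) (w1,w2) =
    vadd (vadd (Ad br y1 y2 (Ad br z1 z2 F)) (Ad br (br y1 z1 z2) y2 F)) (Ad br y1 (br y2 z1 z2) F) (w1,w2)"
    unfolding gen[OF z y] vadd_def gen[OF y z]
    by (simp add: Ad_def i1 i2 d1 d2 algebra_simps)
qed

lemma Dv_delta: "Dv br F (delta q) = Ad br (dv (fst q)) (dv (snd q)) F"
  by (simp add: Dv_def)

lemma Dv_linear2: "linear_on I (Dv br F)"
  unfolding Dv_def by (rule linear_on_lin_ext)

lemma fsp_dv_fst: "q \<in> I \<Longrightarrow> dv (fst q) \<in> fsp B" and fsp_dv_snd: "q \<in> I \<Longrightarrow> dv (snd q) \<in> fsp B"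
  by (auto intro: fsp_dv)

lemma Dv_fsp: "F \<in> fsp I \<Longrightarrow> G \<in> fsp I \<Longrightarrow> Dv br F G \<in> fsp I"
  unfolding Dv_def by (rule lin_ext_fsp) (auto intro!: Ad_fsp fsp_dv)

lemma Dv_linear1:
  assumes G: "G \<in> fsp I" shows "linear_on I (\<lambda>F. Dv br F G)"
  unfolding linear_on_def
proof (intro ballI allI conjI)
  fix F F' :: "'b option \<times> 'b option \<Rightarrow> 'k" and c :: 'k
  assume F: "F \<in> fsp I" and F': "F' \<in> fsp I"
  have Lq: "linear_on I (Ad br (dv (fst q)) (dv (snd q)))" if "q \<in> supp G" for q
  proof -
    have "q \<in> I" using that G by (auto simp: fsp_def)
    then show ?thesis by (intro Ad_linear fsp_dv) auto
  qed
  have a: "Ad br (dv (fst q)) (dv (snd q)) (vadd F F') = vadd (Ad br (dv (fst q)) (dv (snd q)) F) (Ad br (dv (fst q)) (dv (snd q)) F')"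
    and b: "Ad br (dv (fst q)) (dv (snd q)) (vsmult c F) = vsmult c (Ad br (dv (fst q)) (dv (snd q)) F)"
    if "q \<in> supp G" for q
    using Lq[OF that] F F' unfolding linear_on_def by blast+
  show "Dv br (vadd F F') G = vadd (Dv br F G) (Dv br F' G)"
    by (auto simp: Dv_def lin_ext_def fun_eq_iff a vadd_def[of "Ad br _ _ _"] cong: sum.cong)
       (simp add: vadd_def distrib_left sum.distrib)
  show "Dv br (vsmult c F) G = vsmult c (Dv br F G)"
    by (auto simp: Dv_def lin_ext_def fun_eq_iff b vsmult_def[of _ "Ad br _ _ _"] cong: sum.cong)
       (simp add: vsmult_def sum_distrib_left mult_ac)
qed

lemma Dv_ee2: "F \<in> fsp I \<Longrightarrow> Dv br F ee = (\<lambda>_. 0)"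
  unfolding ee_def Dv_delta by (simp add: Ad_zero1)

lemma Dv_ee1: "G \<in> fsp I \<Longrightarrow> Dv br ee G = (\<lambda>_. 0)"
proof -
  assume G: "G \<in> fsp I"
  have "Ad br (dv (fst q)) (dv (snd q)) ee = (\<lambda>_. 0)" if "q \<in> supp G" for q
  proof -
    have "q \<in> I" using that G by (auto simp: fsp_def)
    then show ?thesis by (intro Ad_ee fsp_dv) auto
  qed
  then show ?thesis unfolding Dv_def lin_ext_def by simp
qed

lemma linear_on_Some: "linear_on U (\<lambda>A. (\<lambda>c. A (Some c)) :: 'b \<Rightarrow> 'k)"
  by (simp add: linear_on_def vadd_def vsmult_def)

lemma Dv_tens:
  assumes F: "F \<in> fsp I" and A: "A \<in> fsp U" "A' \<in> fsp U"
  shows "Dv br F (tens A A') = Ad br (\<lambda>c. A (Some c)) (\<lambda>c. A' (Some c)) F"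
  unfolding Dv_def
proof (rule lin_ext_tens[OF _ _ A])
  show "bilinear_on U U (\<lambda>A A'. Ad br (\<lambda>c. A (Some c)) (\<lambda>c. A' (Some c)) F)"
    unfolding bilinear_on_def
  proof (intro ballI conjI)
    fix b :: "'b option \<Rightarrow> 'k" assume b: "b \<in> fsp U"
    show "linear_on U (\<lambda>a. Ad br (\<lambda>c. a (Some c)) (\<lambda>c. b (Some c)) F)"
      by (rule linear_on_comp[OF linear_on_Some _ Ad_linear1[OF F fsp_Some[OF b]]]) (rule fsp_Some)
  next
    fix a :: "'b option \<Rightarrow> 'k" assume a: "a \<in> fsp U"
    show "linear_on U (\<lambda>b. Ad br (\<lambda>c. a (Some c)) (\<lambda>c. b (Some c)) F)"
      by (rule linear_on_comp[OF linear_on_Some _ Ad_linear2[OF F fsp_Some[OF a]]]) (rule fsp_Some)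
  qed
  show "\<And>x y. x \<in> U \<Longrightarrow> y \<in> U \<Longrightarrow>
     (\<lambda>q. Ad br (dv (fst q)) (dv (snd q)) F) (x, y) = Ad br (\<lambda>c. delta x (Some c)) (\<lambda>c. delta y (Some c)) F"
    by (simp add: dv_def)
qed

lemma Dv_vadd2: "F \<in> fsp I \<Longrightarrow> X \<in> fsp I \<Longrightarrow> Y \<in> fsp I \<Longrightarrow> Dv br F (vadd X Y) = vadd (Dv br F X) (Dv br F Y)"
  using Dv_linear2 unfolding linear_on_def by blast

lemma Dv_vsmult2: "F \<in> fsp I \<Longrightarrow> X \<in> fsp I \<Longrightarrow> Dv br F (vsmult c X) = vsmult c (Dv br F X)"
  using Dv_linear2 unfolding linear_on_def by blast

lemma Dv_leib:
  assumes F: "F \<in> fsp I" and G: "G \<in> fsp I" and H: "H \<in> fsp I"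
  shows "Dv br (Dv br F G) H = vadd (Dv br (Dv br F H) G) (Dv br F (Dv br G H))"
proof (rule bilinear_on_basis_eq[of I I "\<lambda>G H. Dv br (Dv br F G) H"
      "\<lambda>G H. vadd (Dv br (Dv br F H) G) (Dv br F (Dv br G H))", OF _ _ _ G H])
  show "bilinear_on I I (\<lambda>G H. Dv br (Dv br F G) H)"
    unfolding bilinear_on_def
    by (auto intro!: linear_on_comp[OF Dv_linear2 _ Dv_linear1] Dv_linear2 Dv_fsp F)
  show "bilinear_on I I (\<lambda>G H. vadd (Dv br (Dv br F H) G) (Dv br F (Dv br G H)))"
    unfolding bilinear_on_def
    by (auto intro!: linear_on_vadd linear_on_comp[OF Dv_linear2 _ Dv_linear1] Dv_linear2 Dv_fsp F
        linear_on_comp[OF Dv_linear1 _ Dv_linear2] linear_on_comp[OF Dv_linear2 _ Dv_linear2])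
  fix q r assume q: "q \<in> I" and r: "r \<in> I"
  obtain q1 q2 where qq: "q = (q1,q2)" by (cases q)
  obtain r1 r2 where rr: "r = (r1,r2)" by (cases r)
  have q12: "q1 \<in> U" "q2 \<in> U" and r12: "r1 \<in> U" "r2 \<in> U" using q r qq rr by auto
  note dq = fsp_dv[OF q12(1)] fsp_dv[OF q12(2)]
  note dr = fsp_dv[OF r12(1)] fsp_dv[OF r12(2)]
  let ?ar = "ad br (dv r1) (dv r2)"
  have X: "tens (?ar (delta q1)) (delta q2) \<in> fsp I" "tens (delta q1) (?ar (delta q2)) \<in> fsp I"
    by (auto intro!: fsp_tens ad_fsp fsp_delta q12 dr)
  have S1: "(\<lambda>c. ?ar (delta q1) (Some c)) = br (dv q1) (dv r1) (dv r2)"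
    "(\<lambda>c. ?ar (delta q2) (Some c)) = br (dv q2) (dv r1) (dv r2)"
    by (simp_all add: ad_Some dv_def)
  have S2: "(\<lambda>c. delta q1 (Some c)) = dv q1" "(\<lambda>c. delta q2 (Some c)) = dv q2"
    by (simp_all add: dv_def)
  have "Dv br F (Dv br (delta q) (delta r)) = Dv br F (Ad br (dv r1) (dv r2) (delta (q1,q2)))"
    by (simp add: Dv_delta qq rr)
  also have "\<dots> = vadd (Ad br (br (dv q1) (dv r1) (dv r2)) (dv q2) F) (Ad br (dv q1) (br (dv q2) (dv r1) (dv r2)) F)"
    by (simp add: Ad_delta dr q12 Dv_vadd2 F X Dv_tens ad_fsp fsp_delta S1 S2)
  finally have e: "Dv br F (Dv br (delta q) (delta r)) = \<dots>" .
  show "Dv br (Dv br F (delta q)) (delta r) =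
      vadd (Dv br (Dv br F (delta r)) (delta q)) (Dv br F (Dv br (delta q) (delta r)))"
    unfolding e by (simp add: Dv_delta qq rr Ad_comm[OF F dq dr] vadd_def fun_eq_iff)
qed

lemma R_delta:
  assumes x: "x \<in> I" and y: "y \<in> I"
  shows "Rmap br (delta (x,y)) = vadd (tens (delta y) (delta x)) (tens ee (Dv br (delta x) (delta y)))"
proof -
  obtain x1 x2 where xx: "x = (x1,x2)" by (cases x)
  obtain y1 y2 where yy: "y = (y1,y2)" by (cases y)
  have x12: "x1 \<in> U" "x2 \<in> U" and y12: "y1 \<in> U" "y2 \<in> U" using x y xx yy by auto
  have a1: "ucoord (0, br (dv x1) (dv y1) (dv y2)) = ad br (dv y1) (dv y2) (delta x1)"
    and a2: "ucoord (0, br (dv x2) (dv y1) (dv y2)) = ad br (dv y1) (dv y2) (delta x2)"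
    by (simp_all add: ad_def dv_def)
  have "Rmap br (delta (x,y)) = Rpure br (ubasis x1) (ubasis x2) (ubasis y1) (ubasis y2)"
    by (simp add: Rmap_def xx yy)
  also have "\<dots> = vadd (tens (delta y) (delta x))
      (vadd (tens ee (tens (ad br (dv y1) (dv y2) (delta x1)) (delta x2)))
            (tens ee (tens (delta x1) (ad br (dv y1) (dv y2) (delta x2)))))"
    unfolding Rpure_def tens4_def ucoord_ubasis ucoord_one snd_ubasis a1 a2
    by (simp add: tens_delta xx yy ee_def)
  also have "\<dots> = vadd (tens (delta y) (delta x)) (tens ee (Dv br (delta x) (delta y)))"
    by (simp add: Dv_delta xx yy Ad_delta fsp_dv x12 y12 tens_vadd2)
  finally show ?thesis .
qed

lemma R_lin_ext: "Rmap br = lin_ext (\<lambda>z. Rmap br (delta z))"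
  by (simp add: Rmap_def)

lemma fsp_ee: "ee \<in> fsp I"
  by (auto simp: ee_def ubar_idx_def intro!: fsp_delta)

lemma bilinear_R: "bilinear_on I I (\<lambda>a b. vadd (tens b a) (tens ee (Dv br a b)))"
  unfolding bilinear_on_def linear_on_def
  by (auto simp: tens_lin Dv_fsp Dv_vadd2 Dv_vsmult2 Dv_linear1[unfolded linear_on_def] fsp_def)
     (auto simp: vadd_def vsmult_def fun_eq_iff algebra_simps)

lemma R_tens:
  assumes "a \<in> fsp I" "b \<in> fsp I"
  shows "Rmap br (tens a b) = vadd (tens b a) (tens ee (Dv br a b))"
  by (subst R_lin_ext, rule lin_ext_tens[OF bilinear_R _ assms]) (simp add: R_delta)

definition "Sinv = lin_ext (\<lambda>z. vadd (tens (delta (snd z)) (delta (fst z)))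
     (vsmult (-1) (tens (Dv br (delta (snd z)) (delta (fst z))) ee)))"

lemma bilinear_S: "bilinear_on I I (\<lambda>a b. vadd (tens b a) (vsmult (-1) (tens (Dv br b a) ee)))"
  unfolding bilinear_on_def linear_on_def
  by (auto simp: tens_lin Dv_fsp Dv_vadd2 Dv_vsmult2 Dv_linear1[unfolded linear_on_def] fsp_def)
     (auto simp: vadd_def vsmult_def fun_eq_iff algebra_simps)

lemma S_tens:
  assumes "a \<in> fsp I" "b \<in> fsp I"
  shows "Sinv (tens a b) = vadd (tens b a) (vsmult (-1) (tens (Dv br b a) ee))"
  unfolding Sinv_def by (rule lin_ext_tens[OF bilinear_S _ assms]) simp

lemma R_linear: "linear_on (I \<times> I) (Rmap br)"
  unfolding Rmap_def by (rule linear_on_lin_ext)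
lemma S_linear: "linear_on (I \<times> I) Sinv"
  unfolding Sinv_def by (rule linear_on_lin_ext)

lemma R_fsp: "T \<in> fsp (I \<times> I) \<Longrightarrow> Rmap br T \<in> fsp (I \<times> I)"
  by (rule linear_on_fsp[OF R_linear]) (auto simp: R_delta intro!: fsp_vadd fsp_tens fsp_delta Dv_fsp fsp_ee)

lemma S_fsp: "T \<in> fsp (I \<times> I) \<Longrightarrow> Sinv T \<in> fsp (I \<times> I)"
  by (rule linear_on_fsp[OF S_linear]) (auto simp: Sinv_def intro!: fsp_vadd fsp_vsmult fsp_tens fsp_delta Dv_fsp fsp_ee)

lemma R_vadd: "X \<in> fsp (I \<times> I) \<Longrightarrow> Y \<in> fsp (I \<times> I) \<Longrightarrow> Rmap br (vadd X Y) = vadd (Rmap br X) (Rmap br Y)"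
  and R_vsmult: "X \<in> fsp (I \<times> I) \<Longrightarrow> Rmap br (vsmult c X) = vsmult c (Rmap br X)"
  using R_linear unfolding linear_on_def by blast+
lemma S_vadd: "X \<in> fsp (I \<times> I) \<Longrightarrow> Y \<in> fsp (I \<times> I) \<Longrightarrow> Sinv (vadd X Y) = vadd (Sinv X) (Sinv Y)"
  and S_vsmult: "X \<in> fsp (I \<times> I) \<Longrightarrow> Sinv (vsmult c X) = vsmult c (Sinv X)"
  using S_linear unfolding linear_on_def by blast+

lemma SR: "T \<in> fsp (I \<times> I) \<Longrightarrow> Sinv (Rmap br T) = T"
proof (rule linear_on_basis_eq[OF linear_on_comp[OF R_linear R_fsp S_linear] linear_on_id])
  fix z assume z: "z \<in> I \<times> I"
  obtain x y where zz: "z = (x,y)" "x \<in> I" "y \<in> I" using z by auto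
  have D: "Dv br (delta x) (delta y) \<in> fsp I" by (intro Dv_fsp fsp_delta zz)
  show "Sinv (Rmap br (delta z)) = delta z"
    unfolding zz R_delta[OF zz(2,3)]
    by (simp add: S_vadd fsp_tens fsp_delta zz D fsp_ee S_tens Dv_ee2)
       (auto simp: vadd_def vsmult_def tens_def delta_def fun_eq_iff)
qed

lemma RS: "T \<in> fsp (I \<times> I) \<Longrightarrow> Rmap br (Sinv T) = T"
proof (rule linear_on_basis_eq[OF linear_on_comp[OF S_linear S_fsp R_linear] linear_on_id])
  fix z assume z: "z \<in> I \<times> I"
  obtain x y where zz: "z = (x,y)" "x \<in> I" "y \<in> I" using z by auto
  have D: "Dv br (delta y) (delta x) \<in> fsp I" by (intro Dv_fsp fsp_delta zz)
  have "Sinv (delta z) = vadd (tens (delta y) (delta x)) (vsmult (-1) (tens (Dv br (delta y) (delta x)) ee))"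
    by (simp add: Sinv_def zz)
  then show "Rmap br (Sinv (delta z)) = delta z"
    by (simp add: R_vadd R_vsmult fsp_vsmult fsp_tens fsp_delta zz D fsp_ee R_tens Dv_ee2)
       (auto simp: vadd_def vsmult_def tens_def delta_def fun_eq_iff)
qed

lemma R_bij: "bij_betw (Rmap br) (fsp (I \<times> I)) (fsp (I \<times> I))"
  by (rule bij_betw_byWitness[where f' = Sinv]) (auto intro: SR RS R_fsp S_fsp)

lemma fin_fsp: "X \<in> fsp J \<Longrightarrow> finite (supp X)"
  by (simp add: fsp_def)

lemma op12R_t3: "a \<in> fsp I \<Longrightarrow> b \<in> fsp I \<Longrightarrow> c \<in> fsp I \<Longrightarrow>
   op12 (Rmap br) (t3 a b c) = vadd (t3 b a c) (t3 ee (Dv br a b) c)"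
proof -
  assume abc: "a \<in> fsp I" "b \<in> fsp I" "c \<in> fsp I"
  have "op12 (Rmap br) (t3 a b c) = (\<lambda>(u,v,w). Rmap br (tens a b) (u,v) * c w)"
    by (rule op12_t3[OF Rmap_def]) (simp_all add: fin_fsp[OF abc(1)] fin_fsp[OF abc(2)] fin_fsp[OF abc(3)])
  then show ?thesis
    by (simp add: R_tens abc) (auto simp: vadd_def t3_def tens_def fun_eq_iff algebra_simps)
qed

lemma op23R_t3: "a \<in> fsp I \<Longrightarrow> b \<in> fsp I \<Longrightarrow> c \<in> fsp I \<Longrightarrow>
   op23 (Rmap br) (t3 a b c) = vadd (t3 a c b) (t3 a ee (Dv br b c))"
proof -
  assume abc: "a \<in> fsp I" "b \<in> fsp I" "c \<in> fsp I"
  have "op23 (Rmap br) (t3 a b c) = (\<lambda>(u,v,w). a u * Rmap br (tens b c) (v,w))"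
    by (rule op23_t3[OF Rmap_def]) (simp_all add: fin_fsp[OF abc(1)] fin_fsp[OF abc(2)] fin_fsp[OF abc(3)])
  then show ?thesis
    by (simp add: R_tens abc) (auto simp: vadd_def t3_def tens_def fun_eq_iff algebra_simps)
qed

lemma t3_zero2: "t3 a (\<lambda>_. 0) c = (\<lambda>_. 0)"
  by (simp add: t3_def fun_eq_iff)
lemma vadd_zero: "vadd X (\<lambda>_. 0) = (X :: _ \<Rightarrow> 'k)"
  by (simp add: vadd_def)

lemma fin_t3: "a \<in> fsp I \<Longrightarrow> b \<in> fsp I \<Longrightarrow> c \<in> fsp I \<Longrightarrow> finite (supp (t3 a b c))"
  by (intro finite_supp_t3 fin_fsp)

lemma YBE_t3:
  assumes a: "a \<in> fsp I" and b: "b \<in> fsp I" and c: "c \<in> fsp I"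
  shows "op12 (Rmap br) (op23 (Rmap br) (op12 (Rmap br) (t3 a b c))) =
         op23 (Rmap br) (op12 (Rmap br) (op23 (Rmap br) (t3 a b c)))"
proof -
  let ?R12 = "op12 (Rmap br)" and ?R23 = "op23 (Rmap br)"
  note e = fsp_ee
  have D: "Dv br a b \<in> fsp I" "Dv br a c \<in> fsp I" "Dv br b c \<in> fsp I"
    using Dv_fsp a b c by auto
  have DD: "Dv br (Dv br a b) c \<in> fsp I" "Dv br (Dv br a c) b \<in> fsp I" "Dv br a (Dv br b c) \<in> fsp I"
    using Dv_fsp a b c D by auto
  have z: "Dv br b ee = (\<lambda>_. 0)" "Dv br ee c = (\<lambda>_. 0)" "Dv br ee ee = (\<lambda>_. 0)" "Dv br ee a = (\<lambda>_. 0)" "Dv br a ee = (\<lambda>_. 0)"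
    using Dv_ee1 Dv_ee2 a b c e by auto
  have L1: "?R23 (?R12 (t3 a b c)) = vadd (vadd (t3 b c a) (t3 b ee (Dv br a c)))
      (vadd (t3 ee c (Dv br a b)) (t3 ee ee (Dv br (Dv br a b) c)))"
    by (simp add: op12R_t3 op23R_t3 op23_vadd fin_t3 a b c e D)
  have L2: "?R12 (?R23 (?R12 (t3 a b c))) = vadd (vadd (vadd (t3 c b a) (t3 ee (Dv br b c) a))
        (vadd (t3 ee b (Dv br a c)) (t3 ee (Dv br b ee) (Dv br a c))))
      (vadd (vadd (t3 c ee (Dv br a b)) (t3 ee (Dv br ee c) (Dv br a b)))
        (vadd (t3 ee ee (Dv br (Dv br a b) c)) (t3 ee (Dv br ee ee) (Dv br (Dv br a b) c))))"
    unfolding L1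
    by (simp add: op12R_t3 op12_vadd finite_supp_vadd fin_t3 a b c e D DD)
  have R1: "?R12 (?R23 (t3 a b c)) = vadd (vadd (t3 c a b) (t3 ee (Dv br a c) b)) (t3 ee a (Dv br b c))"
    by (simp add: op12R_t3 op23R_t3 op12_vadd fin_t3 a b c e D z t3_zero2 vadd_zero)
  have R2: "?R23 (?R12 (?R23 (t3 a b c))) = vadd (vadd (vadd (t3 c b a) (t3 c ee (Dv br a b)))
        (vadd (t3 ee b (Dv br a c)) (t3 ee ee (Dv br (Dv br a c) b))))
      (vadd (t3 ee (Dv br b c) a) (t3 ee ee (Dv br a (Dv br b c))))"
    unfolding R1
    by (simp add: op23R_t3 op23_vadd finite_supp_vadd fin_t3 a b c e D DD)
  show ?thesis
    unfolding L2 R2 z Dv_leib[OF a b c]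
    by (auto simp: vadd_def t3_def fun_eq_iff algebra_simps)
qed

lemma op12_linear: "linear_on J (op12 R)"
  unfolding op12_def by (rule linear_on_lin_ext)
lemma op23_linear: "linear_on J (op23 R)"
  unfolding op23_def by (rule linear_on_lin_ext)

lemma op12_fsp: "T \<in> fsp (I \<times> I \<times> I) \<Longrightarrow> op12 (Rmap br) T \<in> fsp (I \<times> I \<times> I)"
proof (rule linear_on_fsp[OF op12_linear])
  fix z assume "z \<in> I \<times> I \<times> I"
  then obtain x y w where zz: "z = (x,y,w)" "x \<in> I" "y \<in> I" "w \<in> I" by auto
  have d: "delta x \<in> fsp I" "delta y \<in> fsp I" "delta w \<in> fsp I" using zz by (auto intro: fsp_delta)
  show "op12 (Rmap br) (delta z) \<in> fsp (I \<times> I \<times> I)"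
    unfolding zz t3_delta[symmetric] op12R_t3[OF d]
    by (intro fsp_vadd fsp_t3 d fsp_ee Dv_fsp)
qed

lemma op23_fsp: "T \<in> fsp (I \<times> I \<times> I) \<Longrightarrow> op23 (Rmap br) T \<in> fsp (I \<times> I \<times> I)"
proof (rule linear_on_fsp[OF op23_linear])
  fix z assume "z \<in> I \<times> I \<times> I"
  then obtain x y w where zz: "z = (x,y,w)" "x \<in> I" "y \<in> I" "w \<in> I" by auto
  have d: "delta x \<in> fsp I" "delta y \<in> fsp I" "delta w \<in> fsp I" using zz by (auto intro: fsp_delta)
  show "op23 (Rmap br) (delta z) \<in> fsp (I \<times> I \<times> I)"
    unfolding zz t3_delta[symmetric] op23R_t3[OF d]
    by (intro fsp_vadd fsp_t3 d fsp_ee Dv_fsp)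
qed

lemma YBE:
  assumes T: "T \<in> fsp (I \<times> I \<times> I)"
  shows "op12 (Rmap br) (op23 (Rmap br) (op12 (Rmap br) T)) = op23 (Rmap br) (op12 (Rmap br) (op23 (Rmap br) T))"
proof (rule linear_on_basis_eq[OF _ _ _ T])
  show "linear_on (I \<times> I \<times> I) (\<lambda>T. op12 (Rmap br) (op23 (Rmap br) (op12 (Rmap br) T)))"
    by (rule linear_on_comp[where J="I \<times> I \<times> I", OF linear_on_comp[OF op12_linear op12_fsp op23_linear] _ op12_linear])
       (simp_all add: op23_fsp op12_fsp)
  show "linear_on (I \<times> I \<times> I) (\<lambda>T. op23 (Rmap br) (op12 (Rmap br) (op23 (Rmap br) T)))"
    by (rule linear_on_comp[where J="I \<times> I \<times> I", OF linear_on_comp[OF op23_linear op23_fsp op12_linear] _ op23_linear])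
       (simp_all add: op23_fsp op12_fsp)
  fix z assume "z \<in> I \<times> I \<times> I"
  then obtain x y w where zz: "z = (x,y,w)" "x \<in> I" "y \<in> I" "w \<in> I" by auto
  show "op12 (Rmap br) (op23 (Rmap br) (op12 (Rmap br) (delta z))) = op23 (Rmap br) (op12 (Rmap br) (op23 (Rmap br) (delta z)))"
    unfolding zz t3_delta[symmetric] by (rule YBE_t3) (auto intro: fsp_delta zz)
qed

theorem main: "YBE_solution (ubar_idx B \<times> ubar_idx B) (Rmap br)"
  unfolding YBE_solution_def
  using R_linear R_bij YBE unfolding linear_on_def by blast

end


theorem corollary5p6:
  fixes B :: "'b set"
    and br :: "('b \<Rightarrow> 'k::field) \<Rightarrow> ('b \<Rightarrow> 'k) \<Rightarrow> ('b \<Rightarrow> 'k) \<Rightarrow> ('b \<Rightarrow> 'k)"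
  assumes "leibniz3 B br"
  shows "YBE_solution (ubar_idx B \<times> ubar_idx B) (Rmap br)"
  by (rule main[OF assms])

end
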